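(* Let $\mathcal{A}=(Q,\delta,s)$ be a quasi-Wheeler NFA (satisfying the standing assumptions below), let $\mathcal{P}'$ be its coarsest forward-stable partition and $\mathcal{A}'=\mathcal{A}/_{\mathcal{P}'}$ the quotient automaton. Run the Ordered Partition Refinement algorithm described below on $\mathcal{A}$. Then at any step of the algorithm, the current ordered partition $\mathcal{P}=\langle Q_1,\dots,Q_k\rangle$ agrees with every Wheeler order $\prec$ of $\mathcal{A}'$: if $i<j$, $u\in Q_i$ and $v\in Q_j$, then $[u]_{\mathcal{P}'}\prec[v]_{\mathcal{P}'}$ for every Wheeler order $\prec$ of $\mathcal{A}'$.
   Context: $\Sigma=\{a_1<\dots<a_k\}$ is a finite totally ordered alphabet. NFA $\mathcal{A}=(Q,\delta,s)$, $\delta:Q\times\Sigma\to2^Q$, $\delta_a(u)=\delta(u,a)$, $\delta_a(T)=\bigcup_{u\in T}\delta_a(u)$. Standing assumptions: $s$ has no incoming transitions, every state is reachable from $s$, every $v\neq s$ has incoming transitions labeled by exactly one letter $\lambda(v)$, and every letter labels some transition. A partition of $Q$ is forward-stable if for any parts $S,T$ and every $a$, $S\subseteq\delta_a(T)$ or $S\cap\delta_a(T)=\emptyset$; the coarsest one is the forward-stable partition with fewest parts. For a partition $\mathcal{P}'$, $[u]_{\mathcal{P}'}$ is the part containing $u$, and the quotient NFA $\mathcal{A}/_{\mathcal{P}'}$ has the parts as states, source $[s]$, and $[v]\in\delta'_a([u])$ iff some $v'\in[v]$ lies in $\delta_a(u')$ for some $u'\in[u]$. A Wheeler order of an NFA $(Q,\delta,s)$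 is a strict total order $\prec$ on $Q$ with $s\prec v$ for $v\neq s$ such that for all $v\in\delta_a(u)$, $v'\in\delta_{a'}(u')$: if $a<a'$ then $v\prec v'$; if $a=a'$, $u\prec u'$, $v\neq v'$ then $v\prec v'$. A total preorder $\preceq$ on $Q$ is a Wheeler preorder if its equivalence classes form the coarsest forward-stable partition and the induced strict order on classes is a Wheeler order of the quotient; $\mathcal{A}$ is quasi-Wheeler if it has a Wheeler preorder. Algorithm (Ordered Partition Refinement): let $Q_\epsilon=\{s\}$, $Q_a=\{v:\lambda(v)=a\}$. Initialize $\mathcal{P}:=\langle Q_\epsilon,Q_{a_1},\dots,Q_{a_k}\rangle$, $\mathcal{X}:=\langle Q\rangle$. While $\mathcal{X}\neq\mathcal{P}$: let $S$ be the first part of $\mathcal{X}$ that is a union of at least two parts of $\mathcal{P}$; let $B$ be the smaller (in cardinality) of the first and last part of $\mathcal{P}$ contained in $S$; replace $S$ in $\mathcal{X}$ by $B,S\setminus B$ if $B$ was the first such part, else by $S\setminus B,B$. For each part $D$ of $\mathcal{P}$ present before this step, with $a=\lambda(D)$ (for $\{s\}$ take $D_1=\emptyset$): $D_1:=D\cap\delta_a(B)$, $D_2:=D\setminus D_1$, $D_{11}:=D_1\cap\delta_a(S\setminus B)$, $D_{12}:=D_1\setminus D_{11}$; replace $D$ by the nonempty sets among $D_{12},D_{11},D_2$ (in this order) if $B$ was first, else among $D_2,D_{11},D_{12}$ (in this order). Return $\mathcal{P}$. *)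

theory Defs
  imports Main
begin

text \<open>An NFA is given by a state set Q, a finite totally ordered alphabet Al,
  a transition function delta (only meaningful on Q and Al) and a source s.\<close>

definition dimg :: "('q \<Rightarrow> 'a \<Rightarrow> 'q set) \<Rightarrow> 'a \<Rightarrow> 'q set \<Rightarrow> 'q set" where
  "dimg \<delta> a T = (\<Union>u\<in>T. \<delta> u a)"

definition nfa_std :: "'q set \<Rightarrow> 'a::linorder set \<Rightarrow> ('q \<Rightarrow> 'a \<Rightarrow> 'q set) \<Rightarrow> 'q \<Rightarrow> bool" where
  "nfa_std Q Al \<delta> s \<longleftrightarrow>
     finite Q \<and> finite Al \<and> s \<in> Q \<and>
     (\<forall>u\<in>Q. \<forall>a\<in>Al. \<delta> u a \<subseteq> Q) \<and>
     (\<forall>u\<in>Q. \<forall>a\<in>Al. s \<notin> \<delta> u a) \<and>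
     (\<forall>v\<in>Q. (s, v) \<in> {(u, w). u \<in> Q \<and> (\<exists>a\<in>Al. w \<in> \<delta> u a)}\<^sup>*) \<and>
     (\<forall>v\<in>Q. v \<noteq> s \<longrightarrow> (\<exists>!a. a \<in> Al \<and> (\<exists>u\<in>Q. v \<in> \<delta> u a))) \<and>
     (\<forall>a\<in>Al. \<exists>u\<in>Q. \<delta> u a \<noteq> {})"

definition lab :: "'q set \<Rightarrow> 'a set \<Rightarrow> ('q \<Rightarrow> 'a \<Rightarrow> 'q set) \<Rightarrow> 'q \<Rightarrow> 'a" where
  "lab Q Al \<delta> v = (SOME a. a \<in> Al \<and> (\<exists>u\<in>Q. v \<in> \<delta> u a))"

definition is_partition :: "'q set \<Rightarrow> 'q set set \<Rightarrow> bool" where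
  "is_partition Q P \<longleftrightarrow> (\<forall>Y\<in>P. Y \<noteq> {} \<and> Y \<subseteq> Q) \<and> \<Union>P = Q \<and>
     (\<forall>Y\<in>P. \<forall>Z\<in>P. Y \<noteq> Z \<longrightarrow> Y \<inter> Z = {})"

definition forward_stable :: "'q set \<Rightarrow> 'a set \<Rightarrow> ('q \<Rightarrow> 'a \<Rightarrow> 'q set) \<Rightarrow> 'q set set \<Rightarrow> bool" where
  "forward_stable Q Al \<delta> P \<longleftrightarrow> is_partition Q P \<and>
     (\<forall>S\<in>P. \<forall>T\<in>P. \<forall>a\<in>Al. S \<subseteq> dimg \<delta> a T \<or> S \<inter> dimg \<delta> a T = {})"

definition coarsest_fs :: "'q set \<Rightarrow> 'a set \<Rightarrow> ('q \<Rightarrow> 'a \<Rightarrow> 'q set) \<Rightarrow> 'q set set \<Rightarrow> bool" where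
  "coarsest_fs Q Al \<delta> P \<longleftrightarrow> forward_stable Q Al \<delta> P \<and>
     (\<forall>P2. forward_stable Q Al \<delta> P2 \<longrightarrow> card P \<le> card P2)"

definition part_of :: "'q set set \<Rightarrow> 'q \<Rightarrow> 'q set" where
  "part_of P u = (THE Y. Y \<in> P \<and> u \<in> Y)"

definition quot_delta :: "('q \<Rightarrow> 'a \<Rightarrow> 'q set) \<Rightarrow> 'q set set \<Rightarrow> 'q set \<Rightarrow> 'a \<Rightarrow> 'q set set" where
  "quot_delta \<delta> P X a = {Y \<in> P. \<exists>v\<in>Y. \<exists>u\<in>X. v \<in> \<delta> u a}"

definition wheeler_order :: "'q set \<Rightarrow> 'a::linorder set \<Rightarrow> ('q \<Rightarrow> 'a \<Rightarrow> 'q set) \<Rightarrow> 'q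
    \<Rightarrow> ('q \<Rightarrow> 'q \<Rightarrow> bool) \<Rightarrow> bool" where
  "wheeler_order Q Al \<delta> s lt \<longleftrightarrow>
     (\<forall>x\<in>Q. \<not> lt x x) \<and>
     (\<forall>x\<in>Q. \<forall>y\<in>Q. \<forall>z\<in>Q. lt x y \<and> lt y z \<longrightarrow> lt x z) \<and>
     (\<forall>x\<in>Q. \<forall>y\<in>Q. x \<noteq> y \<longrightarrow> lt x y \<or> lt y x) \<and>
     (\<forall>v\<in>Q. v \<noteq> s \<longrightarrow> lt s v) \<and>
     (\<forall>u\<in>Q. \<forall>u'\<in>Q. \<forall>a\<in>Al. \<forall>a'\<in>Al. \<forall>v\<in>\<delta> u a. \<forall>v'\<in>\<delta> u' a'.
        (a < a' \<longrightarrow> lt v v') \<and> (a = a' \<and> lt u u' \<and> v \<noteq> v' \<longrightarrow> lt v v'))"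

definition wheeler_preorder :: "'q set \<Rightarrow> 'a::linorder set \<Rightarrow> ('q \<Rightarrow> 'a \<Rightarrow> 'q set) \<Rightarrow> 'q
    \<Rightarrow> ('q \<Rightarrow> 'q \<Rightarrow> bool) \<Rightarrow> bool" where
  "wheeler_preorder Q Al \<delta> s le \<longleftrightarrow>
     (\<forall>x\<in>Q. le x x) \<and>
     (\<forall>x\<in>Q. \<forall>y\<in>Q. \<forall>z\<in>Q. le x y \<and> le y z \<longrightarrow> le x z) \<and>
     (\<forall>x\<in>Q. \<forall>y\<in>Q. le x y \<or> le y x) \<and>
     (let C = (\<lambda>u. {v\<in>Q. le u v \<and> le v u}) ` Q in
        coarsest_fs Q Al \<delta> C \<and>
        wheeler_order C Al (quot_delta \<delta> C) (part_of C s)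
          (\<lambda>X Y. \<exists>u\<in>X. \<exists>v\<in>Y. le u v \<and> \<not> le v u))"

definition quasi_wheeler :: "'q set \<Rightarrow> 'a::linorder set \<Rightarrow> ('q \<Rightarrow> 'a \<Rightarrow> 'q set) \<Rightarrow> 'q \<Rightarrow> bool" where
  "quasi_wheeler Q Al \<delta> s \<longleftrightarrow> (\<exists>le. wheeler_preorder Q Al \<delta> s le)"

definition opr_init :: "'q set \<Rightarrow> 'a::linorder set \<Rightarrow> ('q \<Rightarrow> 'a \<Rightarrow> 'q set) \<Rightarrow> 'q
    \<Rightarrow> 'q set list \<times> 'q set list" where
  "opr_init Q Al \<delta> s =
     ([{s}] @ map (\<lambda>a. {v\<in>Q. v \<noteq> s \<and> lab Q Al \<delta> v = a}) (sorted_list_of_set Al), [Q])"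

text \<open>Splitting a part D of P with respect to the splitter B \<subseteq> S; fstB says
  whether B was the first part of P contained in S.\<close>
definition split_part :: "'q set \<Rightarrow> 'a set \<Rightarrow> ('q \<Rightarrow> 'a \<Rightarrow> 'q set) \<Rightarrow> 'q
    \<Rightarrow> 'q set \<Rightarrow> 'q set \<Rightarrow> bool \<Rightarrow> 'q set \<Rightarrow> 'q set list" where
  "split_part Q Al \<delta> s B S fstB D =
     (let a = lab Q Al \<delta> (SOME x. x \<in> D);
          D1 = (if D = {s} then {} else D \<inter> dimg \<delta> a B);
          D2 = D - D1;
          D11 = D1 \<inter> dimg \<delta> a (S - B);
          D12 = D1 - D11
      in filter (\<lambda>Y. Y \<noteq> {}) (if fstB then [D12, D11, D2] else [D2, D11, D12]))"

definition is_candidate :: "'q set list \<Rightarrow> 'q set \<Rightarrow> bool" where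
  "is_candidate P S \<longleftrightarrow> S = \<Union>{D \<in> set P. D \<subseteq> S} \<and> 2 \<le> card {D \<in> set P. D \<subseteq> S}"

text \<open>One iteration of the while loop. When the first and last parts of P inside S
  have equal cardinality, either may be chosen as B (both tie-breaks are allowed).\<close>
definition opr_step :: "'q set \<Rightarrow> 'a set \<Rightarrow> ('q \<Rightarrow> 'a \<Rightarrow> 'q set) \<Rightarrow> 'q
    \<Rightarrow> 'q set list \<times> 'q set list \<Rightarrow> 'q set list \<times> 'q set list \<Rightarrow> bool" where
  "opr_step Q Al \<delta> s st st' \<longleftrightarrow>
     (let P = fst st; X = snd st in
      X \<noteq> P \<and>
      (\<exists>i fstB. i < length X \<and> is_candidate P (X ! i) \<and> (\<forall>j<i. \<not> is_candidate P (X ! j)) \<and>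
        (let S = X ! i;
             Ds = filter (\<lambda>D. D \<subseteq> S) P;
             B = (if fstB then hd Ds else last Ds)
         in (if fstB then card (hd Ds) \<le> card (last Ds) else card (last Ds) \<le> card (hd Ds)) \<and>
            snd st' = take i X @ (if fstB then [B, S - B] else [S - B, B]) @ drop (Suc i) X \<and>
            fst st' = concat (map (split_part Q Al \<delta> s B S fstB) P))))"

end

theory Submission imports Defs begin

locale opr =
  fixes Q :: "'q set" and Al :: "'a::linorder set" and \<delta> :: "'q \<Rightarrow> 'a \<Rightarrow> 'q set" and s :: 'q
    and P' :: "'q set set" and lt :: "'q set \<Rightarrow> 'q set \<Rightarrow> bool"
  assumes nfa: "nfa_std Q Al \<delta> s"
    and fs: "forward_stable Q Al \<delta> P'"
    and wo: "wheeler_order P' Al (quot_delta \<delta> P') (part_of P' s) lt"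
begin

abbreviation cl where "cl u \<equiv> part_of P' u"
abbreviation L where "L D \<equiv> lab Q Al \<delta> (SOME x. x \<in> D)"
definition Rel where "Rel D E \<longleftrightarrow> (\<forall>u\<in>D. \<forall>v\<in>E. lt (cl u) (cl v))"

lemma nfa_facts:
  "s \<in> Q" "\<And>u a. u\<in>Q \<Longrightarrow> a\<in>Al \<Longrightarrow> \<delta> u a \<subseteq> Q" "\<And>u a. u\<in>Q \<Longrightarrow> a\<in>Al \<Longrightarrow> s \<notin> \<delta> u a"
  "\<And>v. v\<in>Q \<Longrightarrow> v\<noteq>s \<Longrightarrow> \<exists>!a. a\<in>Al \<and> (\<exists>u\<in>Q. v\<in>\<delta> u a)" "\<And>a. a\<in>Al \<Longrightarrow> \<exists>u\<in>Q. \<delta> u a \<noteq> {}"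
  using nfa unfolding nfa_std_def by blast+

lemma lab_in: assumes "v\<in>Q" "v\<noteq>s"
  shows "lab Q Al \<delta> v \<in> Al \<and> (\<exists>u\<in>Q. v \<in> \<delta> u (lab Q Al \<delta> v))"
  unfolding lab_def by (rule someI_ex) (use nfa_facts(4)[OF assms] in blast)

lemma lab_eq: assumes "u\<in>Q" "a\<in>Al" "v\<in>\<delta> u a" shows "lab Q Al \<delta> v = a"
proof -
  have v: "v \<in> Q" "v \<noteq> s" using assms nfa_facts(2,3) by blast+
  show ?thesis using nfa_facts(4)[OF v] lab_in[OF v] assms by blast
qed

lemma partP: "is_partition Q P'" using fs unfolding forward_stable_def by blast

lemma fsP: "C\<in>P' \<Longrightarrow> T\<in>P' \<Longrightarrow> a\<in>Al \<Longrightarrow> C \<subseteq> dimg \<delta> a T \<or> C \<inter> dimg \<delta> a T = {}"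
  using fs unfolding forward_stable_def by blast

lemma cl: assumes "u\<in>Q" shows "cl u \<in> P' \<and> u \<in> cl u"
proof -
  have "\<exists>!C. C\<in>P' \<and> u\<in>C" using partP assms unfolding is_partition_def by blast
  then show ?thesis unfolding part_of_def by (rule theI')
qed

lemma cl_eq: assumes "C\<in>P'" "u\<in>C" shows "cl u = C"
proof -
  have "u \<in> Q" using partP assms unfolding is_partition_def by blast
  then show ?thesis using cl partP assms unfolding is_partition_def by blast
qed

lemma cl_sub: "u \<in> Q \<Longrightarrow> cl u \<subseteq> Q" using cl partP unfolding is_partition_def by blast

lemma dimg_iff: "x \<in> dimg \<delta> a Y \<longleftrightarrow> (\<exists>p\<in>Y. x \<in> \<delta> p a)" by (simp add: dimg_def)

lemma class_pred:
  assumes "u\<in>Q" "w \<in> cl u" "u \<in> dimg \<delta> a Y" "a\<in>Al" "Y\<subseteq>Q" "\<forall>y\<in>Y. cl y \<subseteq> Y"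
  shows "w \<in> dimg \<delta> a Y"
proof -
  obtain p where p: "p\<in>Y" "u \<in> \<delta> p a" using assms(3) unfolding dimg_def by blast
  have pQ: "p \<in> Q" using p assms(5) by blast
  have cu: "cl u \<in> P'" "u \<in> cl u" using cl[OF assms(1)] by auto
  have cp: "cl p \<in> P'" "p \<in> cl p" using cl[OF pQ] by auto
  have ui: "u \<in> dimg \<delta> a (cl p)" using p(2) cp(2) unfolding dimg_def by blast
  have "cl u \<subseteq> dimg \<delta> a (cl p) \<or> cl u \<inter> dimg \<delta> a (cl p) = {}" using fsP[OF cu(1) cp(1) assms(4)] .
  then have "cl u \<subseteq> dimg \<delta> a (cl p)" using ui cu(2) by blast
  then have "w \<in> dimg \<delta> a (cl p)" using assms(2) by blast
  then show ?thesis using assms(6) p(1) unfolding dimg_def by blast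
qed

lemma wo5: "\<forall>u\<in>P'. \<forall>u'\<in>P'. \<forall>a\<in>Al. \<forall>a'\<in>Al. \<forall>v\<in>quot_delta \<delta> P' u a. \<forall>v'\<in>quot_delta \<delta> P' u' a'.
        (a < a' \<longrightarrow> lt v v') \<and> (a = a' \<and> lt u u' \<and> v \<noteq> v' \<longrightarrow> lt v v')"
  using wo unfolding wheeler_order_def by (rule conjunct2[OF conjunct2[OF conjunct2[OF conjunct2]]])

lemma wo4: "\<forall>v\<in>P'. v \<noteq> part_of P' s \<longrightarrow> lt (part_of P' s) v"
  using wo unfolding wheeler_order_def by (rule conjunct1[OF conjunct2[OF conjunct2[OF conjunct2]]])

lemma core_lt:
  assumes "p\<in>Q" "q\<in>Q" "a\<in>Al" "u\<in>\<delta> p a" "w\<in>\<delta> q a" "lt (cl p) (cl q)" "cl u \<noteq> cl w"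
  shows "lt (cl u) (cl w)"
proof -
  have uQ: "u\<in>Q" "w\<in>Q" using assms nfa_facts(2) by blast+
  have "cl u \<in> quot_delta \<delta> P' (cl p) a" unfolding quot_delta_def using cl[OF uQ(1)] cl[OF assms(1)] assms(4) by blast
  moreover have "cl w \<in> quot_delta \<delta> P' (cl q) a" unfolding quot_delta_def using cl[OF uQ(2)] cl[OF assms(2)] assms(5) by blast
  ultimately show ?thesis using wo5[rule_format, OF conjunct1[OF cl[OF assms(1)]] conjunct1[OF cl[OF assms(2)]] assms(3) assms(3)] assms(6,7) by blast
qed

lemma core_lt2:
  assumes "p\<in>Q" "q\<in>Q" "a\<in>Al" "b\<in>Al" "a<b" "u\<in>\<delta> p a" "w\<in>\<delta> q b"
  shows "lt (cl u) (cl w)"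
proof -
  have uQ: "u\<in>Q" "w\<in>Q" using assms nfa_facts(2) by blast+
  have "cl u \<in> quot_delta \<delta> P' (cl p) a" unfolding quot_delta_def using cl[OF uQ(1)] cl[OF assms(1)] assms(6) by blast
  moreover have "cl w \<in> quot_delta \<delta> P' (cl q) b" unfolding quot_delta_def using cl[OF uQ(2)] cl[OF assms(2)] assms(7) by blast
  ultimately show ?thesis using wo5[rule_format, OF conjunct1[OF cl[OF assms(1)]] conjunct1[OF cl[OF assms(2)]] assms(3) assms(4)] assms(5) by blast
qed

definition oinv :: "'q set list \<Rightarrow> 'q set list \<Rightarrow> bool" where
  "oinv P X \<longleftrightarrow> (\<forall>D\<in>set P. D \<noteq> {} \<and> D \<subseteq> Q \<and> (D = {s} \<or> (s \<notin> D \<and> (\<forall>x\<in>D. lab Q Al \<delta> x = L D)))) \<and>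
     (\<forall>D\<in>set P. D \<noteq> {s} \<longrightarrow> (\<forall>T\<in>set X. D \<subseteq> dimg \<delta> (L D) T \<or> D \<inter> dimg \<delta> (L D) T = {})) \<and>
     (\<forall>D\<in>set P. \<forall>C\<in>P'. C \<inter> D \<noteq> {} \<longrightarrow> C \<subseteq> D) \<and> sorted_wrt Rel P"

lemma inv_1: "oinv P X \<Longrightarrow> \<forall>D\<in>set P. D \<noteq> {} \<and> D \<subseteq> Q \<and> (D = {s} \<or> (s \<notin> D \<and> (\<forall>x\<in>D. lab Q Al \<delta> x = L D)))"
  unfolding oinv_def by (rule conjunct1)
lemma inv_2: "oinv P X \<Longrightarrow> \<forall>D\<in>set P. D \<noteq> {s} \<longrightarrow> (\<forall>T\<in>set X. D \<subseteq> dimg \<delta> (L D) T \<or> D \<inter> dimg \<delta> (L D) T = {})"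
  unfolding oinv_def by (rule conjunct1[OF conjunct2])
lemma inv_3: "oinv P X \<Longrightarrow> \<forall>D\<in>set P. \<forall>C\<in>P'. C \<inter> D \<noteq> {} \<longrightarrow> C \<subseteq> D"
  unfolding oinv_def by (rule conjunct1[OF conjunct2[OF conjunct2]])
lemma inv_4: "oinv P X \<Longrightarrow> sorted_wrt Rel P"
  unfolding oinv_def by (rule conjunct2[OF conjunct2[OF conjunct2]])

lemma L_sub: assumes "D' \<noteq> {}" "D' \<subseteq> D" "\<forall>x\<in>D. lab Q Al \<delta> x = L D" shows "L D' = L D"
proof -
  have "(SOME x. x \<in> D') \<in> D'" using assms(1) by (simp add: some_in_eq)
  then show ?thesis using assms by auto
qed

lemma sorted_concat_map:
  assumes "sorted_wrt Rel xs" "\<forall>x\<in>set xs. sorted_wrt Rel (f x)" "\<forall>x\<in>set xs. \<forall>y\<in>set (f x). y \<subseteq> x"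
  shows "sorted_wrt Rel (concat (map f xs))"
  using assms
proof (induction xs)
  case Nil then show ?case by simp
next
  case (Cons x xs)
  have "\<forall>a\<in>set (f x). \<forall>b\<in>set (concat (map f xs)). Rel a b"
  proof (intro ballI)
    fix a b assume a: "a \<in> set (f x)" and b: "b \<in> set (concat (map f xs))"
    then obtain y where y: "y \<in> set xs" "b \<in> set (f y)" by auto
    have "Rel x y" using Cons.prems(1) y by simp
    moreover have "a \<subseteq> x" "b \<subseteq> y" using Cons.prems(3) a y by auto
    ultimately show "Rel a b" unfolding Rel_def by blast
  qed
  then show ?case using Cons by (simp add: sorted_wrt_append)
qed


lemma class_struct:
  assumes "C \<in> P'" "x \<in> C" "x \<noteq> s"
  shows "\<forall>w\<in>C. w \<noteq> s \<and> lab Q Al \<delta> w = lab Q Al \<delta> x"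
proof -
  have xQ: "x \<in> Q" using partP assms unfolding is_partition_def by blast
  obtain u where u: "u\<in>Q" "x \<in> \<delta> u (lab Q Al \<delta> x)" and lA: "lab Q Al \<delta> x \<in> Al" using lab_in[OF xQ assms(3)] by blast
  have "x \<in> dimg \<delta> (lab Q Al \<delta> x) (cl u)" using u cl[OF u(1)] unfolding dimg_def by blast
  then have "C \<subseteq> dimg \<delta> (lab Q Al \<delta> x) (cl u)" using fsP[OF assms(1) conjunct1[OF cl[OF u(1)]] lA] assms(2) by blast
  show ?thesis
  proof
    fix w assume "w \<in> C"
    then obtain p where p: "p \<in> cl u" "w \<in> \<delta> p (lab Q Al \<delta> x)" using \<open>C \<subseteq> _\<close> unfolding dimg_def by blast
    have pQ: "p \<in> Q" using p(1) cl_sub[OF u(1)] by blast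
    show "w \<noteq> s \<and> lab Q Al \<delta> w = lab Q Al \<delta> x" using nfa_facts(3)[OF pQ lA] lab_eq[OF pQ lA] p(2) by blast
  qed
qed

lemma cl_s: "cl s = {s}"
proof -
  have c: "cl s \<in> P'" "s \<in> cl s" using cl[OF nfa_facts(1)] by auto
  have W: "w = s" if w: "w \<in> cl s" for w
  proof (rule ccontr)
    assume "w \<noteq> s"
    then have "\<forall>y\<in>cl s. y \<noteq> s \<and> lab Q Al \<delta> y = lab Q Al \<delta> w" by (rule class_struct[OF c(1) w])
    then show False using c(2) by blast
  qed
  then have sub: "cl s \<subseteq> {s}" by blast
  show ?thesis using sub c(2) subset_singleton_iff by fastforce
qed

abbreviation Qa where "Qa a \<equiv> {v\<in>Q. v \<noteq> s \<and> lab Q Al \<delta> v = a}"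

lemma Qa_ne: "a \<in> Al \<Longrightarrow> Qa a \<noteq> {}"
proof -
  assume a: "a \<in> Al"
  obtain u v where "u\<in>Q" "v \<in> \<delta> u a" using nfa_facts(5)[OF a] by blast
  then show ?thesis using nfa_facts(2,3) lab_eq a by blast
qed

lemma L_Qa: "a \<in> Al \<Longrightarrow> L (Qa a) = a"
proof -
  assume a: "a \<in> Al"
  have "\<exists>x. x \<in> Qa a" using Qa_ne[OF a] by blast
  then have "(SOME x. x \<in> Qa a) \<in> Qa a" by (rule someI_ex)
  then show ?thesis by (simp only: mem_Collect_eq)
qed

lemma init_inv: "oinv (fst (opr_init Q Al \<delta> s)) (snd (opr_init Q Al \<delta> s))"
proof -
  have finAl: "finite Al" using nfa unfolding nfa_std_def by blast
  have sAl: "set (sorted_list_of_set Al) = Al" using finAl by simp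
  have P0: "fst (opr_init Q Al \<delta> s) = {s} # map Qa (sorted_list_of_set Al)" "snd (opr_init Q Al \<delta> s) = [Q]"
    unfolding opr_init_def by simp_all
  have I1: "\<forall>D\<in>set ({s} # map Qa (sorted_list_of_set Al)). D \<noteq> {} \<and> D \<subseteq> Q \<and> (D = {s} \<or> (s \<notin> D \<and> (\<forall>x\<in>D. lab Q Al \<delta> x = L D)))"
    using Qa_ne L_Qa nfa_facts(1) sAl by auto
  have I3: "\<forall>D\<in>set ({s} # map Qa (sorted_list_of_set Al)). D \<noteq> {s} \<longrightarrow> (\<forall>T\<in>set [Q]. D \<subseteq> dimg \<delta> (L D) T \<or> D \<inter> dimg \<delta> (L D) T = {})"
  proof (intro ballI impI)
    fix D T assume D: "D \<in> set ({s} # map Qa (sorted_list_of_set Al))" "D \<noteq> {s}" and T: "T \<in> set [Q]"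
    then obtain a where a: "a \<in> Al" "D = Qa a" using sAl by auto
    have "Qa a \<subseteq> dimg \<delta> a Q"
    proof
      fix v assume v: "v \<in> Qa a"
      then obtain u where "u \<in> Q" "v \<in> \<delta> u (lab Q Al \<delta> v)" using lab_in by blast
      then show "v \<in> dimg \<delta> a Q" using v unfolding dimg_def by blast
    qed
    then show "D \<subseteq> dimg \<delta> (L D) T \<or> D \<inter> dimg \<delta> (L D) T = {}" using a T L_Qa by simp
  qed
  have I4: "\<forall>D\<in>set ({s} # map Qa (sorted_list_of_set Al)). \<forall>C\<in>P'. C \<inter> D \<noteq> {} \<longrightarrow> C \<subseteq> D"
  proof (intro ballI impI)
    fix D C assume D: "D \<in> set ({s} # map Qa (sorted_list_of_set Al))" and C: "C \<in> P'" "C \<inter> D \<noteq> {}"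
    have CQ: "C \<subseteq> Q" using C partP unfolding is_partition_def by blast
    show "C \<subseteq> D"
    proof (cases "D = {s}")
      case True
      then have "cl s = C" using cl_eq C by blast
      then show ?thesis using cl_s True by simp
    next
      case False
      then obtain a where a: "a \<in> Al" "D = Qa a" using D sAl by auto
      then obtain x where x: "x \<in> C" "x \<in> Qa a" using C by blast
      then show ?thesis using class_struct[OF C(1) x(1)] CQ a by auto
    qed
  qed
  have S1: "Rel {s} (Qa a)" for a
    unfolding Rel_def
  proof (intro ballI)
    fix u v assume u: "u \<in> {s}" and v: "v \<in> Qa a"
    have "cl v \<in> P'" "v \<in> cl v" using cl v by auto
    moreover have "cl v \<noteq> cl s" using cl_s \<open>v \<in> cl v\<close> v by auto
    ultimately show "lt (cl u) (cl v)" using wo4 u by auto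
  qed
  have S2: "Rel (Qa a) (Qa b)" if ab: "a \<in> Al" "b \<in> Al" "a < b" for a b
    unfolding Rel_def
  proof (intro ballI)
    fix u v assume u: "u \<in> Qa a" and v: "v \<in> Qa b"
    obtain p where p: "p \<in> Q" "u \<in> \<delta> p a" using lab_in u by blast
    obtain q where q: "q \<in> Q" "v \<in> \<delta> q b" using lab_in v by blast
    show "lt (cl u) (cl v)" using core_lt2[OF p(1) q(1) ab p(2) q(2)] .
  qed
  have "sorted_wrt (<) (sorted_list_of_set Al)" using strict_sorted_list_of_set by simp
  then have "sorted_wrt (\<lambda>a b. Rel (Qa a) (Qa b)) (sorted_list_of_set Al)"
    by (rule sorted_wrt_mono_rel[rotated]) (use S2 sAl in auto)
  then have S: "sorted_wrt Rel ({s} # map Qa (sorted_list_of_set Al))"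
    using S1 by (simp add: sorted_wrt_map)
  show ?thesis unfolding oinv_def P0 using I1 I3 I4 S by (intro conjI)
qed


lemma split_props:
  assumes oinv: "oinv P X" and D: "D \<in> set P" and S: "S \<in> set X" and B: "B \<in> set P" "B \<subseteq> S"
    and Scover: "\<forall>q\<in>S. \<exists>E\<in>set P. q \<in> E \<and> E \<subseteq> S"
    and ORD: "if fstB then (\<forall>p\<in>B. \<forall>q\<in>S-B. lt (cl p) (cl q)) else (\<forall>p\<in>B. \<forall>q\<in>S-B. lt (cl q) (cl p))"
  shows "sorted_wrt Rel (split_part Q Al \<delta> s B S fstB D) \<and>
    (\<forall>D'\<in>set (split_part Q Al \<delta> s B S fstB D). D' \<noteq> {} \<and> D' \<subseteq> D \<and>
       (D' = {s} \<or> (s \<notin> D' \<and> (\<forall>x\<in>D'. lab Q Al \<delta> x = L D'))) \<and>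
       (D' \<noteq> {s} \<longrightarrow> (\<forall>T\<in>insert B (insert (S-B) (set X)). D' \<subseteq> dimg \<delta> (L D') T \<or> D' \<inter> dimg \<delta> (L D') T = {})) \<and>
       (\<forall>C\<in>P'. C \<inter> D' \<noteq> {} \<longrightarrow> C \<subseteq> D'))"
proof -
  have DI0: "D \<noteq> {} \<and> D \<subseteq> Q \<and> (D = {s} \<or> (s \<notin> D \<and> (\<forall>x\<in>D. lab Q Al \<delta> x = L D)))"
    using inv_1[OF oinv] D by (rule bspec)
  have DI: "D \<noteq> {}" "D \<subseteq> Q" "D = {s} \<or> (s \<notin> D \<and> (\<forall>x\<in>D. lab Q Al \<delta> x = L D))"
    using DI0 by auto
  have stabD: "D \<noteq> {s} \<Longrightarrow> T \<in> set X \<Longrightarrow> D \<subseteq> dimg \<delta> (L D) T \<or> D \<inter> dimg \<delta> (L D) T = {}" for T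
    using inv_2[OF oinv] D by auto
  have I4: "\<And>E C. E \<in> set P \<Longrightarrow> C \<in> P' \<Longrightarrow> C \<inter> E \<noteq> {} \<Longrightarrow> C \<subseteq> E"
    using inv_3[OF oinv] by auto
  have PQ: "\<And>E. E \<in> set P \<Longrightarrow> E \<subseteq> Q" using inv_1[OF oinv] by auto
  have SQ: "S \<subseteq> Q" using Scover PQ by blast
  have BQ: "B \<subseteq> Q" using PQ B by blast
  have clB: "\<forall>y\<in>B. cl y \<subseteq> B"
  proof
    fix y assume y: "y \<in> B"
    then have "cl y \<in> P'" "y \<in> cl y" using cl BQ by auto
    then show "cl y \<subseteq> B" using I4[OF B(1)] y by blast
  qed
  have clSB: "\<forall>y\<in>S-B. cl y \<subseteq> S-B"
  proof
    fix y assume y: "y \<in> S-B"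
    then obtain E where E: "E \<in> set P" "y \<in> E" "E \<subseteq> S" using Scover by blast
    have c: "cl y \<in> P'" "y \<in> cl y" using cl SQ y by auto
    then have "cl y \<subseteq> E" using I4[OF E(1)] E(2) by blast
    moreover have "cl y \<inter> B = {}"
    proof (rule ccontr)
      assume "cl y \<inter> B \<noteq> {}"
      then have "cl y \<subseteq> B" using I4[OF B(1) c(1)] by blast
      then show False using c y by blast
    qed
    ultimately show "cl y \<subseteq> S-B" using E by blast
  qed
  show ?thesis
  proof (cases "D = {s}")
    case True
    have sp: "split_part Q Al \<delta> s B S fstB D = [{s}]" unfolding split_part_def Let_def using True by simp
    show ?thesis unfolding sp using True I4[OF D] by auto
  next
    case False
    have sD: "s \<notin> D" and labD: "\<forall>x\<in>D. lab Q Al \<delta> x = L D" using DI(3) False by auto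
    define a where "a = L D"
    obtain x0 where x0: "x0 \<in> D" using DI(1) by blast
    have aAl: "a \<in> Al" using lab_in[of x0] x0 DI(2) sD labD a_def by auto
    define D1 where "D1 = D \<inter> dimg \<delta> a B"
    define D2 where "D2 = D - D1"
    define D11 where "D11 = D1 \<inter> dimg \<delta> a (S - B)"
    define D12 where "D12 = D1 - D11"
    have sp: "split_part Q Al \<delta> s B S fstB D = filter (\<lambda>Y. Y \<noteq> {}) (if fstB then [D12, D11, D2] else [D2, D11, D12])"
      unfolding split_part_def Let_def D12_def D11_def D2_def D1_def a_def using False by simp
    have stabS: "D \<subseteq> dimg \<delta> a S \<or> D \<inter> dimg \<delta> a S = {}" using stabD[OF False S] a_def by simp
    have F1: "\<And>x. x \<in> D1 \<Longrightarrow> \<exists>p\<in>B. x \<in> \<delta> p a" unfolding D1_def dimg_def by blast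
    have F2: "\<And>x. x \<in> D11 \<Longrightarrow> \<exists>q\<in>S-B. x \<in> \<delta> q a" unfolding D11_def dimg_def by blast
    have F3: "\<And>x y. x \<in> D2 \<Longrightarrow> y \<in> D1 \<Longrightarrow> \<exists>q\<in>S-B. x \<in> \<delta> q a"
    proof -
      fix x y assume x: "x \<in> D2" and y: "y \<in> D1"
      have "y \<in> dimg \<delta> a S" using y B(2) unfolding D1_def dimg_def by blast
      then have "D \<subseteq> dimg \<delta> a S" using stabS y D1_def by blast
      then obtain q where "q \<in> S" "x \<in> \<delta> q a" using x unfolding D2_def dimg_def by blast
      moreover have "q \<notin> B" using x \<open>x \<in> \<delta> q a\<close> unfolding D2_def D1_def dimg_def by blast
      ultimately show "\<exists>q\<in>S-B. x \<in> \<delta> q a" by blast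
    qed
    have memb: "(x \<in> dimg \<delta> a B \<longleftrightarrow> w \<in> dimg \<delta> a B) \<and> (x \<in> dimg \<delta> a (S-B) \<longleftrightarrow> w \<in> dimg \<delta> a (S-B))"
      if x: "x \<in> D" and w: "w \<in> cl x" for x w
    proof -
      have xQ: "x \<in> Q" using x DI(2) by blast
      have c: "cl x \<in> P'" "x \<in> cl x" using cl[OF xQ] by auto
      have wQ: "w \<in> Q" using w cl_sub[OF xQ] by blast
      have "cl w = cl x" using cl_eq[OF c(1) w] .
      then have xw: "x \<in> cl w" using c by simp
      have SBQ: "S - B \<subseteq> Q" using SQ by blast
      show ?thesis using class_pred[OF xQ w _ aAl BQ clB] class_pred[OF wQ xw _ aAl BQ clB]
        class_pred[OF xQ w _ aAl SBQ clSB] class_pred[OF wQ xw _ aAl SBQ clSB] by blast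
    qed
    have G1: "\<And>x y. x \<in> D1 \<Longrightarrow> y \<in> D2 \<Longrightarrow> cl x \<noteq> cl y"
    proof
      fix x y assume x: "x \<in> D1" and y: "y \<in> D2" and e: "cl x = cl y"
      have "y \<in> cl x" using e cl[of y] y DI(2) D2_def by auto
      then show False using memb[of x y] x y D1_def D2_def by blast
    qed
    have G2: "\<And>x y. x \<in> D11 \<Longrightarrow> y \<in> D12 \<Longrightarrow> cl x \<noteq> cl y"
    proof
      fix x y assume x: "x \<in> D11" and y: "y \<in> D12" and e: "cl x = cl y"
      have "y \<in> cl x" using e cl[of y] y DI(2) D12_def D1_def by auto
      then show False using memb[of x y] x y D11_def D12_def D1_def by blast
    qed
    have core: "lt (cl u) (cl w)" if "u \<in> \<delta> p a" "w \<in> \<delta> q a" "p \<in> Q" "q \<in> Q" "lt (cl p) (cl q)" "cl u \<noteq> cl w" for u w p q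
      using core_lt[OF that(3,4) aAl that(1,2,5,6)] .
    have s1: "D12 \<subseteq> D1" "D11 \<subseteq> D1" unfolding D12_def D11_def by auto
    have sorted3: "sorted_wrt Rel (if fstB then [D12, D11, D2] else [D2, D11, D12])"
    proof (cases fstB)
      case True
      have O: "\<And>p q. p \<in> B \<Longrightarrow> q \<in> S - B \<Longrightarrow> lt (cl p) (cl q)" using ORD True by simp
      have gen: "Rel Y Z" if H: "\<And>u w. u \<in> Y \<Longrightarrow> w \<in> Z \<Longrightarrow> (\<exists>p\<in>B. u \<in> \<delta> p a) \<and> (\<exists>q\<in>S-B. w \<in> \<delta> q a) \<and> cl u \<noteq> cl w" for Y Z
        unfolding Rel_def
      proof (intro ballI)
        fix u w assume u: "u \<in> Y" and w: "w \<in> Z"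
        obtain p where p: "p \<in> B" "u \<in> \<delta> p a" using H[OF u w] by blast
        obtain q where q: "q \<in> S-B" "w \<in> \<delta> q a" using H[OF u w] by blast
        have pq: "p \<in> Q" "q \<in> Q" using p(1) q(1) BQ SQ by auto
        show "lt (cl u) (cl w)" using core[OF p(2) q(2) pq O[OF p(1) q(1)]] H[OF u w] by blast
      qed
      have r1: "Rel D12 D11"
      proof (rule gen)
        fix u w assume u: "u \<in> D12" and w: "w \<in> D11"
        show "(\<exists>p\<in>B. u \<in> \<delta> p a) \<and> (\<exists>q\<in>S-B. w \<in> \<delta> q a) \<and> cl u \<noteq> cl w"
          using F1[of u] F2[OF w] G2[OF w u] u s1 by auto
      qed
      have r2: "Rel D12 D2"
      proof (rule gen)
        fix u w assume u: "u \<in> D12" and w: "w \<in> D2"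
        have u1: "u \<in> D1" using u s1 by auto
        show "(\<exists>p\<in>B. u \<in> \<delta> p a) \<and> (\<exists>q\<in>S-B. w \<in> \<delta> q a) \<and> cl u \<noteq> cl w"
          using F1[OF u1] F3[OF w u1] G1[OF u1 w] by auto
      qed
      have r3: "Rel D11 D2"
      proof (rule gen)
        fix u w assume u: "u \<in> D11" and w: "w \<in> D2"
        have u1: "u \<in> D1" using u s1 by auto
        show "(\<exists>p\<in>B. u \<in> \<delta> p a) \<and> (\<exists>q\<in>S-B. w \<in> \<delta> q a) \<and> cl u \<noteq> cl w"
          using F1[OF u1] F3[OF w u1] G1[OF u1 w] by auto
      qed
      show ?thesis using True r1 r2 r3 by simp
    next
      case False
      have O: "\<And>p q. p \<in> B \<Longrightarrow> q \<in> S - B \<Longrightarrow> lt (cl q) (cl p)" using ORD False by simp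
      have gen: "Rel Y Z" if H: "\<And>u w. u \<in> Y \<Longrightarrow> w \<in> Z \<Longrightarrow> (\<exists>q\<in>S-B. u \<in> \<delta> q a) \<and> (\<exists>p\<in>B. w \<in> \<delta> p a) \<and> cl u \<noteq> cl w" for Y Z
        unfolding Rel_def
      proof (intro ballI)
        fix u w assume u: "u \<in> Y" and w: "w \<in> Z"
        obtain q where q: "q \<in> S-B" "u \<in> \<delta> q a" using H[OF u w] by blast
        obtain p where p: "p \<in> B" "w \<in> \<delta> p a" using H[OF u w] by blast
        have pq: "q \<in> Q" "p \<in> Q" using p(1) q(1) BQ SQ by auto
        show "lt (cl u) (cl w)" using core[OF q(2) p(2) pq O[OF p(1) q(1)]] H[OF u w] by blast
      qed
      have r1: "Rel D2 D11"
      proof (rule gen)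
        fix u w assume u: "u \<in> D2" and w: "w \<in> D11"
        have w1: "w \<in> D1" using w s1 by auto
        show "(\<exists>q\<in>S-B. u \<in> \<delta> q a) \<and> (\<exists>p\<in>B. w \<in> \<delta> p a) \<and> cl u \<noteq> cl w"
          using F1[OF w1] F3[OF u w1] G1[OF w1 u] by auto
      qed
      have r2: "Rel D2 D12"
      proof (rule gen)
        fix u w assume u: "u \<in> D2" and w: "w \<in> D12"
        have w1: "w \<in> D1" using w s1 by auto
        show "(\<exists>q\<in>S-B. u \<in> \<delta> q a) \<and> (\<exists>p\<in>B. w \<in> \<delta> p a) \<and> cl u \<noteq> cl w"
          using F1[OF w1] F3[OF u w1] G1[OF w1 u] by auto
      qed
      have r3: "Rel D11 D12"
      proof (rule gen)
        fix u w assume u: "u \<in> D11" and w: "w \<in> D12"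
        have w1: "w \<in> D1" using w s1 by auto
        show "(\<exists>q\<in>S-B. u \<in> \<delta> q a) \<and> (\<exists>p\<in>B. w \<in> \<delta> p a) \<and> cl u \<noteq> cl w"
          using F1[OF w1] F2[OF u] G2[OF u w] by auto
      qed
      show ?thesis using False r1 r2 r3 by simp
    qed
    have sub: "D12 \<subseteq> D" "D11 \<subseteq> D" "D2 \<subseteq> D" unfolding D12_def D11_def D2_def D1_def by auto
    have props: "Y \<noteq> {} \<and> Y \<subseteq> D \<and> (Y = {s} \<or> (s \<notin> Y \<and> (\<forall>x\<in>Y. lab Q Al \<delta> x = L Y))) \<and>
       (Y \<noteq> {s} \<longrightarrow> (\<forall>T\<in>insert B (insert (S-B) (set X)). Y \<subseteq> dimg \<delta> (L Y) T \<or> Y \<inter> dimg \<delta> (L Y) T = {})) \<and>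
       (\<forall>C\<in>P'. C \<inter> Y \<noteq> {} \<longrightarrow> C \<subseteq> Y)" if Y: "Y \<in> {D12, D11, D2}" "Y \<noteq> {}" for Y
    proof -
      have YD: "Y \<subseteq> D" using Y sub by blast
      have LY: "L Y = a" using L_sub[OF Y(2) YD labD] a_def by simp
      have lab: "s \<notin> Y \<and> (\<forall>x\<in>Y. lab Q Al \<delta> x = L Y)" using LY YD sD labD a_def by auto
      have stT: "Y \<subseteq> dimg \<delta> a T \<or> Y \<inter> dimg \<delta> a T = {}" if T: "T \<in> insert B (insert (S-B) (set X))" for T
      proof -
        { assume "T \<in> set X"
          then have ?thesis using stabD[OF False] a_def YD by blast }
        moreover
        { assume "T = B"
          then have ?thesis using Y unfolding D12_def D11_def D2_def D1_def by blast }
        moreover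
        { assume TT: "T = S - B"
          have dS: "dimg \<delta> a S = dimg \<delta> a B \<union> dimg \<delta> a (S - B)" unfolding dimg_def using B(2) by blast
          have ?thesis
          proof (cases "Y = D2")
            case True
            then show ?thesis using stabS dS TT unfolding D2_def D1_def by blast
          next
            case False
            then show ?thesis using Y TT unfolding D12_def D11_def by blast
          qed }
        ultimately show ?thesis using T by blast
      qed
      have I4Y: "\<forall>C\<in>P'. C \<inter> Y \<noteq> {} \<longrightarrow> C \<subseteq> Y"
      proof (intro ballI impI subsetI)
        fix C w assume C: "C \<in> P'" "C \<inter> Y \<noteq> {}" and w: "w \<in> C"
        obtain x where x: "x \<in> C" "x \<in> Y" using C by blast
        have CD: "C \<subseteq> D" using I4[OF D C(1)] C(2) YD by blast
        have "cl x = C" using cl_eq[OF C(1) x(1)] .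
        then have m: "(x \<in> dimg \<delta> a B \<longleftrightarrow> w \<in> dimg \<delta> a B) \<and> (x \<in> dimg \<delta> a (S-B) \<longleftrightarrow> w \<in> dimg \<delta> a (S-B))"
          using memb[of x w] x YD w by blast
        show "w \<in> Y" using Y(1) x(2) m w CD unfolding D12_def D11_def D2_def D1_def by blast
      qed
      show ?thesis using Y(2) YD lab stT LY I4Y by simp
    qed
    have setsp: "set (split_part Q Al \<delta> s B S fstB D) \<subseteq> {Y. Y \<in> {D12, D11, D2} \<and> Y \<noteq> {}}"
      unfolding sp by auto
    have A1: "sorted_wrt Rel (split_part Q Al \<delta> s B S fstB D)" unfolding sp by (rule sorted_wrt_filter[OF sorted3])
    have A2: "\<forall>D'\<in>set (split_part Q Al \<delta> s B S fstB D). D' \<noteq> {} \<and> D' \<subseteq> D \<and>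
       (D' = {s} \<or> (s \<notin> D' \<and> (\<forall>x\<in>D'. lab Q Al \<delta> x = L D'))) \<and>
       (D' \<noteq> {s} \<longrightarrow> (\<forall>T\<in>insert B (insert (S-B) (set X)). D' \<subseteq> dimg \<delta> (L D') T \<or> D' \<inter> dimg \<delta> (L D') T = {})) \<and>
       (\<forall>C\<in>P'. C \<inter> D' \<noteq> {} \<longrightarrow> C \<subseteq> D')"
    proof (intro ballI)
      fix D' assume D': "D' \<in> set (split_part Q Al \<delta> s B S fstB D)"
      then have "D' \<in> {D12, D11, D2}" "D' \<noteq> {}" using setsp by blast+
      then show "D' \<noteq> {} \<and> D' \<subseteq> D \<and>
       (D' = {s} \<or> (s \<notin> D' \<and> (\<forall>x\<in>D'. lab Q Al \<delta> x = L D'))) \<and>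
       (D' \<noteq> {s} \<longrightarrow> (\<forall>T\<in>insert B (insert (S-B) (set X)). D' \<subseteq> dimg \<delta> (L D') T \<or> D' \<inter> dimg \<delta> (L D') T = {})) \<and>
       (\<forall>C\<in>P'. C \<inter> D' \<noteq> {} \<longrightarrow> C \<subseteq> D')" by (rule props)
    qed
    show ?thesis using A1 A2 by (rule conjI)
  qed
qed


lemma step_core:
  fixes st' :: "'q set list \<times> 'q set list" and fstB :: bool and i :: nat
  assumes oinv: "oinv P X" and i: "i < length X" and cand: "is_candidate P (X ! i)"
  defines "S \<equiv> X ! i"
  defines "Ds \<equiv> filter (\<lambda>D. D \<subseteq> S) P"
  defines "B \<equiv> (if fstB then hd Ds else last Ds)"
  assumes X2: "snd st' = take i X @ (if fstB then [B, S - B] else [S - B, B]) @ drop (Suc i) X"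
    and P2: "fst st' = concat (map (split_part Q Al \<delta> s B S fstB) P)"
  shows "oinv (fst st') (snd st')"
proof -
  have S: "S \<in> set X" unfolding S_def using i by simp
  have c1: "S = \<Union>{D \<in> set P. D \<subseteq> S}" and c2: "2 \<le> card {D \<in> set P. D \<subseteq> S}"
    using cand unfolding is_candidate_def S_def by auto
  have setDs: "set Ds = {D \<in> set P. D \<subseteq> S}" unfolding Ds_def by auto
  have Dsne: "Ds \<noteq> []"
  proof
    assume "Ds = []"
    then have "{D \<in> set P. D \<subseteq> S} = {}" using setDs by simp
    then have "card {D \<in> set P. D \<subseteq> S} = 0" by (simp only: card.empty)
    then show False using c2 by linarith
  qed
  have BDs: "B \<in> set Ds" unfolding B_def using Dsne by simp
  have B: "B \<in> set P" "B \<subseteq> S" using BDs setDs by auto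
  have Scover: "\<forall>q\<in>S. \<exists>E\<in>set P. q \<in> E \<and> E \<subseteq> S"
  proof
    fix q assume "q \<in> S"
    then have "q \<in> \<Union>{D \<in> set P. D \<subseteq> S}" using c1 by simp
    then show "\<exists>E\<in>set P. q \<in> E \<and> E \<subseteq> S" by blast
  qed
  have sP: "sorted_wrt Rel P" using inv_4[OF oinv] .
  have sDs: "sorted_wrt Rel Ds" unfolding Ds_def using sorted_wrt_filter[OF sP] .
  have ORD: "if fstB then (\<forall>p\<in>B. \<forall>q\<in>S-B. lt (cl p) (cl q)) else (\<forall>p\<in>B. \<forall>q\<in>S-B. lt (cl q) (cl p))"
  proof (cases fstB)
    case True
    have Bh: "B = hd Ds" unfolding B_def using True by simp
    have eq: "Ds = hd Ds # tl Ds" using Dsne by simp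
    have R: "\<forall>E\<in>set (tl Ds). Rel (hd Ds) E" using sDs eq by (metis sorted_wrt.simps(2))
    have "\<forall>p\<in>B. \<forall>q\<in>S-B. lt (cl p) (cl q)"
    proof (intro ballI)
      fix p q assume p: "p \<in> B" and q: "q \<in> S - B"
      then obtain E where E: "E \<in> set P" "q \<in> E" "E \<subseteq> S" using Scover by blast
      then have "E \<in> set Ds" using setDs by simp
      then have "E \<in> set (tl Ds) \<or> E = hd Ds" using eq by (metis set_ConsD)
      then have "E \<in> set (tl Ds)" using E(2) q Bh by blast
      then have "Rel B E" using R Bh by blast
      then show "lt (cl p) (cl q)" using p E(2) unfolding Rel_def by blast
    qed
    then show ?thesis using True by simp
  next
    case False
    have Bl: "B = last Ds" unfolding B_def using False by simp
    have eq: "Ds = butlast Ds @ [last Ds]" using Dsne by simp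
    have R: "\<forall>E\<in>set (butlast Ds). Rel E (last Ds)" using sDs eq sorted_wrt_append[of Rel "butlast Ds" "[last Ds]"] by simp
    have "\<forall>p\<in>B. \<forall>q\<in>S-B. lt (cl q) (cl p)"
    proof (intro ballI)
      fix p q assume p: "p \<in> B" and q: "q \<in> S - B"
      then obtain E where E: "E \<in> set P" "q \<in> E" "E \<subseteq> S" using Scover by blast
      then have "E \<in> set Ds" using setDs by simp
      then have "E \<in> set (butlast Ds) \<or> E = last Ds" using eq by (metis rotate1.simps(2) set_ConsD set_rotate1)
      then have "E \<in> set (butlast Ds)" using E(2) q Bl by blast
      then have "Rel E B" using R Bl by blast
      then show "lt (cl q) (cl p)" using p E(2) unfolding Rel_def by blast
    qed
    then show ?thesis using False by simp
  qed
  have SP: "sorted_wrt Rel (split_part Q Al \<delta> s B S fstB D) \<and>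
    (\<forall>D'\<in>set (split_part Q Al \<delta> s B S fstB D). D' \<noteq> {} \<and> D' \<subseteq> D \<and>
       (D' = {s} \<or> (s \<notin> D' \<and> (\<forall>x\<in>D'. lab Q Al \<delta> x = L D'))) \<and>
       (D' \<noteq> {s} \<longrightarrow> (\<forall>T\<in>insert B (insert (S-B) (set X)). D' \<subseteq> dimg \<delta> (L D') T \<or> D' \<inter> dimg \<delta> (L D') T = {})) \<and>
       (\<forall>C\<in>P'. C \<inter> D' \<noteq> {} \<longrightarrow> C \<subseteq> D'))" if D: "D \<in> set P" for D
    by (rule split_props[OF oinv D S B Scover ORD])
  have SP1: "sorted_wrt Rel (split_part Q Al \<delta> s B S fstB D)" if "D \<in> set P" for D
    using SP[OF that] by (rule conjunct1)
  have SP2: "D' \<noteq> {} \<and> D' \<subseteq> D \<and>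
       (D' = {s} \<or> (s \<notin> D' \<and> (\<forall>x\<in>D'. lab Q Al \<delta> x = L D'))) \<and>
       (D' \<noteq> {s} \<longrightarrow> (\<forall>T\<in>insert B (insert (S-B) (set X)). D' \<subseteq> dimg \<delta> (L D') T \<or> D' \<inter> dimg \<delta> (L D') T = {})) \<and>
       (\<forall>C\<in>P'. C \<inter> D' \<noteq> {} \<longrightarrow> C \<subseteq> D')" if "D \<in> set P" "D' \<in> set (split_part Q Al \<delta> s B S fstB D)" for D D'
    using conjunct2[OF SP[OF that(1)]] that(2) by (rule bspec)
  have PQ: "\<And>E. E \<in> set P \<Longrightarrow> E \<subseteq> Q" using inv_1[OF oinv] by auto
  have setX2: "set (snd st') \<subseteq> insert B (insert (S-B) (set X))"
    unfolding X2 using set_take_subset[of i X] set_drop_subset[of "Suc i" X] by auto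
  have mem: "\<exists>D\<in>set P. D' \<in> set (split_part Q Al \<delta> s B S fstB D)" if "D' \<in> set (fst st')" for D'
    using that unfolding P2 by simp
  have G1: "\<forall>D'\<in>set (fst st'). D' \<noteq> {} \<and> D' \<subseteq> Q \<and> (D' = {s} \<or> (s \<notin> D' \<and> (\<forall>x\<in>D'. lab Q Al \<delta> x = L D')))"
  proof
    fix D' assume "D' \<in> set (fst st')"
    then obtain D where D: "D \<in> set P" "D' \<in> set (split_part Q Al \<delta> s B S fstB D)" using mem by blast
    have "D' \<noteq> {} \<and> D' \<subseteq> D \<and> (D' = {s} \<or> (s \<notin> D' \<and> (\<forall>x\<in>D'. lab Q Al \<delta> x = L D')))"
      using SP2[OF D] by blast
    then show "D' \<noteq> {} \<and> D' \<subseteq> Q \<and> (D' = {s} \<or> (s \<notin> D' \<and> (\<forall>x\<in>D'. lab Q Al \<delta> x = L D')))"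
      using PQ[OF D(1)] by blast
  qed
  have G2: "\<forall>D'\<in>set (fst st'). D' \<noteq> {s} \<longrightarrow> (\<forall>T\<in>set (snd st'). D' \<subseteq> dimg \<delta> (L D') T \<or> D' \<inter> dimg \<delta> (L D') T = {})"
  proof (intro ballI impI)
    fix D' T assume D': "D' \<in> set (fst st')" "D' \<noteq> {s}" and T: "T \<in> set (snd st')"
    then obtain D where D: "D \<in> set P" "D' \<in> set (split_part Q Al \<delta> s B S fstB D)" using mem by blast
    have "\<forall>T\<in>insert B (insert (S-B) (set X)). D' \<subseteq> dimg \<delta> (L D') T \<or> D' \<inter> dimg \<delta> (L D') T = {}"
      using SP2[OF D] D'(2) by blast
    then show "D' \<subseteq> dimg \<delta> (L D') T \<or> D' \<inter> dimg \<delta> (L D') T = {}" using T setX2 by blast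
  qed
  have G3: "\<forall>D'\<in>set (fst st'). \<forall>C\<in>P'. C \<inter> D' \<noteq> {} \<longrightarrow> C \<subseteq> D'"
  proof (rule ballI)
    fix D' assume D': "D' \<in> set (fst st')"
    then obtain D where D: "D \<in> set P" "D' \<in> set (split_part Q Al \<delta> s B S fstB D)" using mem by blast
    show "\<forall>C\<in>P'. C \<inter> D' \<noteq> {} \<longrightarrow> C \<subseteq> D'" using SP2[OF D] by blast
  qed
  have G4a: "\<forall>x\<in>set P. sorted_wrt Rel (split_part Q Al \<delta> s B S fstB x)" using SP1 by blast
  have G4b: "\<forall>x\<in>set P. \<forall>y\<in>set (split_part Q Al \<delta> s B S fstB x). y \<subseteq> x" using SP2 by blast
  have G4: "sorted_wrt Rel (fst st')" unfolding P2 by (rule sorted_concat_map[OF sP G4a G4b])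
  show ?thesis unfolding oinv_def using G1 G2 G3 G4 by (intro conjI)
qed

lemma step_inv:
  assumes "oinv P X" "opr_step Q Al \<delta> s (P, X) st'"
  shows "oinv (fst st') (snd st')"
  using assms(2) unfolding opr_step_def Let_def fst_conv snd_conv
  apply (elim conjE exE)
  apply (rule step_core[OF assms(1)])
     apply assumption+
  done

lemma reach_inv:
  assumes "(opr_step Q Al \<delta> s)\<^sup>*\<^sup>* (opr_init Q Al \<delta> s) st"
  shows "oinv (fst st) (snd st)"
  using assms
proof (induction rule: rtranclp_induct)
  case base
  then show ?case by (rule init_inv)
next
  case (step y z)
  have "opr_step Q Al \<delta> s (fst y, snd y) z" using step.hyps(2) by simp
  then show ?case by (rule step_inv[OF step.IH])
qed

end

theorem lemma11:
  fixes Q :: "'q set" and Al :: "'a::linorder set" and \<delta> :: "'q \<Rightarrow> 'a \<Rightarrow> 'q set" and s :: 'q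
    and P' :: "'q set set" and P X :: "'q set list" and lt :: "'q set \<Rightarrow> 'q set \<Rightarrow> bool"
  assumes "nfa_std Q Al \<delta> s"
    and "quasi_wheeler Q Al \<delta> s"
    and "coarsest_fs Q Al \<delta> P'"
    and "(opr_step Q Al \<delta> s)\<^sup>*\<^sup>* (opr_init Q Al \<delta> s) (P, X)"
    and "i < j" and "j < length P"
    and "u \<in> P ! i" and "v \<in> P ! j"
    and "wheeler_order P' Al (quot_delta \<delta> P') (part_of P' s) lt"
  shows "lt (part_of P' u) (part_of P' v)"
proof -
  have fs: "forward_stable Q Al \<delta> P'" using assms(3) unfolding coarsest_fs_def by (rule conjunct1)
  interpret opr Q Al \<delta> s P' lt
    by (rule opr.intro[OF assms(1) fs assms(9)])
  have "sorted_wrt Rel P" using inv_4[OF reach_inv[OF assms(4)]] by simp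
  then have "Rel (P ! i) (P ! j)" using sorted_wrt_iff_nth_less assms(5,6) by blast
  then show ?thesis unfolding Rel_def using assms(7,8) by blast
qed

end
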